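(* Let $X\sim p$ with $\mathrm{Var}[X]<\infty$, and let $\tau:=-\widetilde{\mathcal{T}}\,\mathrm{id}$, where $\mathrm{id}$ is the identity function. Then $$\mathrm{Var}[X]=\|\tau\|_{L^1(p)}\le\|w\|_{L^1(p)}$$ for every weight $w$ such that $C(p,w)=1$.
   Context: Let $-\infty\le a<b\le\infty$, $p\in L^1(]a,b[)$ with $p>0$ a.e. and $\int_a^b p=1$. A weight is a function $w\in L^1_{\mathrm{loc}}(]a,b[)$ with $w>0$ a.e. and $pw\in L^1_{\mathrm{loc}}(]a,b[)$. Write $\mathbb{E}_p[f]=\int_a^b fp$. $H^1(p,w)=\{h\in L^2(p): h$ locally absolutely continuous, $h'\in L^2(pw)\}$, and $C(p,w)\in[0,\infty]$ is the smallest $C$ with $\mathrm{Var}_p[h]\le C\,\mathbb{E}_p[|h'|^2w]$ for all $h\in H^1(p,w)$. For $h\in L^1(p)$, $\widetilde{\mathcal{T}} h(x)=\frac{1}{p(x)}\int_a^x(h-\mathbb{E}_p[h])\,p$. *)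

theory Defs
  imports "HOL-Analysis.Analysis"
begin

definition Ioo_e :: "ereal \<Rightarrow> ereal \<Rightarrow> real set" where
  "Ioo_e a b = {x. a < ereal x \<and> ereal x < b}"

definition is_density :: "ereal \<Rightarrow> ereal \<Rightarrow> (real \<Rightarrow> real) \<Rightarrow> bool" where
  "is_density a b p \<longleftrightarrow> a < b \<and>
     set_integrable lborel (Ioo_e a b) p \<and>
     (AE x in lborel. x \<in> Ioo_e a b \<longrightarrow> p x > 0) \<and>
     (LINT x : Ioo_e a b | lborel. p x) = 1"

definition loc_integrable :: "ereal \<Rightarrow> ereal \<Rightarrow> (real \<Rightarrow> real) \<Rightarrow> bool" where
  "loc_integrable a b f \<longleftrightarrow> f \<in> borel_measurable lborel \<and>
     (\<forall>c d. {c..d} \<subseteq> Ioo_e a b \<longrightarrow> set_integrable lborel {c..d} f)"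

definition is_weight :: "ereal \<Rightarrow> ereal \<Rightarrow> (real \<Rightarrow> real) \<Rightarrow> (real \<Rightarrow> real) \<Rightarrow> bool" where
  "is_weight a b p w \<longleftrightarrow> loc_integrable a b w \<and>
     (AE x in lborel. x \<in> Ioo_e a b \<longrightarrow> w x > 0) \<and>
     loc_integrable a b (\<lambda>x. p x * w x)"

definition Ep :: "ereal \<Rightarrow> ereal \<Rightarrow> (real \<Rightarrow> real) \<Rightarrow> (real \<Rightarrow> real) \<Rightarrow> real" where
  "Ep a b p f = (LINT x : Ioo_e a b | lborel. f x * p x)"

definition Varp :: "ereal \<Rightarrow> ereal \<Rightarrow> (real \<Rightarrow> real) \<Rightarrow> (real \<Rightarrow> real) \<Rightarrow> real" where
  "Varp a b p f = Ep a b p (\<lambda>x. (f x - Ep a b p f)\<^sup>2)"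

text \<open>h belongs to H^1(p,w) with (a.e.-determined) derivative g:
  h \<in> L^2(p); h is locally absolutely continuous on ]a,b[, i.e. it is the indefinite integral
  of the locally integrable function g = h'; and h' \<in> L^2(p w).\<close>
definition in_H1 :: "ereal \<Rightarrow> ereal \<Rightarrow> (real \<Rightarrow> real) \<Rightarrow> (real \<Rightarrow> real)
     \<Rightarrow> (real \<Rightarrow> real) \<Rightarrow> (real \<Rightarrow> real) \<Rightarrow> bool" where
  "in_H1 a b p w h g \<longleftrightarrow>
     h \<in> borel_measurable lborel \<and>
     set_integrable lborel (Ioo_e a b) (\<lambda>x. (h x)\<^sup>2 * p x) \<and>
     loc_integrable a b g \<and>
     (\<forall>x\<in>Ioo_e a b. \<forall>y\<in>Ioo_e a b. x \<le> y \<longrightarrow> h y - h x = (LINT t : {x..y} | lborel. g t)) \<and>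
     set_integrable lborel (Ioo_e a b) (\<lambda>x. (g x)\<^sup>2 * p x * w x)"

definition Cpw :: "ereal \<Rightarrow> ereal \<Rightarrow> (real \<Rightarrow> real) \<Rightarrow> (real \<Rightarrow> real) \<Rightarrow> ennreal" where
  "Cpw a b p w = Inf {C. \<forall>h g. in_H1 a b p w h g \<longrightarrow>
       ennreal (Varp a b p h) \<le> C * (\<integral>\<^sup>+ x \<in> Ioo_e a b. ennreal ((g x)\<^sup>2 * w x * p x) \<partial>lborel)}"

definition Ttilde :: "ereal \<Rightarrow> ereal \<Rightarrow> (real \<Rightarrow> real) \<Rightarrow> (real \<Rightarrow> real) \<Rightarrow> real \<Rightarrow> real" where
  "Ttilde a b p h x = (1 / p x) *
     (LINT t : {t. a < ereal t \<and> t \<le> x} | lborel. (h t - Ep a b p h) * p t)"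

end

theory Submission
  imports Defs
begin
lemma absle: "\<bar>x::real\<bar> \<le> 1 + x\<^sup>2"
proof (cases "\<bar>x\<bar> \<le> 1")
  case False
  then have "\<bar>x\<bar> * 1 \<le> \<bar>x\<bar> * \<bar>x\<bar>" by (intro mult_left_mono) auto
  moreover have "x^2 = \<bar>x\<bar> * \<bar>x\<bar>" by (simp add: power2_eq_square)
  ultimately show ?thesis by linarith
qed (use zero_le_power2[of x] in linarith)

lemma setup1:
  fixes a b :: ereal and p :: "real \<Rightarrow> real"
  assumes dens: "is_density a b p"
    and finvar: "set_integrable lborel (Ioo_e a b) (\<lambda>x. x\<^sup>2 * p x)"
  fixes I q \<mu>
  assumes I_def: "I = Ioo_e a b"
  assumes q_def: "q = (\<lambda>t. indicator I t * p t)"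
  assumes \<mu>_def: "\<mu> = integral\<^sup>L lborel (\<lambda>t. t * q t)"
  shows "I \<in> sets lborel" "integrable lborel q" "AE t in lborel. 0 \<le> q t" "integral\<^sup>L lborel q = 1"
    "integrable lborel (\<lambda>t. t * q t)" "integrable lborel (\<lambda>t. t\<^sup>2 * q t)"
    "a < ereal \<mu>" "ereal \<mu> < b" "AE t in lborel. t \<in> I \<longrightarrow> 0 < p t"
proof -
  show Imeas[measurable]: "I \<in> sets lborel" unfolding I_def Ioo_e_def by measurable
  have ab: "a < b" and pint: "set_integrable lborel I p" and ppos: "AE x in lborel. x \<in> I \<longrightarrow> p x > 0"
    and p1: "(LINT x:I|lborel. p x) = 1" using dens unfolding is_density_def I_def by auto
  then show "AE t in lborel. t \<in> I \<longrightarrow> 0 < p t" by simp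
  show qint: "integrable lborel q" using pint by (simp add: set_integrable_def q_def)
  then have qmeas[measurable]: "q \<in> borel_measurable lborel" by auto
  show qnn: "AE t in lborel. 0 \<le> q t" using ppos by eventually_elim (auto simp: q_def indicator_def)
  show q1: "integral\<^sup>L lborel q = 1" using p1 by (simp add: set_lebesgue_integral_def q_def)
  show x2: "integrable lborel (\<lambda>t. t\<^sup>2 * q t)" using finvar 
    by (simp add: set_integrable_def q_def I_def mult_ac)
  show x1: "integrable lborel (\<lambda>t. t * q t)"
  proof (rule Bochner_Integration.integrable_bound[OF Bochner_Integration.integrable_add[OF qint x2]])
    show "(\<lambda>t. t * q t) \<in> borel_measurable lborel" by measurable
    show "AE x in lborel. norm (x * q x) \<le> norm (q x + x\<^sup>2 * q x)"
      using qnn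
    proof eventually_elim
      case (elim x)
      have "\<bar>x\<bar> \<le> 1 + x\<^sup>2" by (rule absle)
      then have "\<bar>x\<bar> * q x \<le> (1 + x\<^sup>2) * q x" using elim by (intro mult_right_mono) auto
      then show ?case using elim by (simp add: abs_mult algebra_simps)
    qed
  qed
  show "ereal \<mu> < b"
  proof (cases b)
    case (real \<beta>)
    show ?thesis
    proof (rule ccontr)
      assume "\<not> ereal \<mu> < b"
      then have le: "\<beta> \<le> \<mu>" using real by auto
      have eq: "integral\<^sup>L lborel (\<lambda>t. (\<beta> - t) * q t) = \<beta> - \<mu>"
        using qint x1 q1 by (simp add: left_diff_distrib \<mu>_def)
      have int: "integrable lborel (\<lambda>t. (\<beta> - t) * q t)" using qint x1 by (simp add: left_diff_distrib)
      have nn: "AE t in lborel. 0 \<le> (\<beta> - t) * q t" using qnn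
        by eventually_elim (auto simp: q_def I_def Ioo_e_def real indicator_def)
      have "integral\<^sup>L lborel (\<lambda>t. (\<beta> - t) * q t) = 0"
        using integral_nonneg_AE[OF nn] eq le by linarith
      then have "AE t in lborel. (\<beta> - t) * q t = 0" using integral_nonneg_eq_0_iff_AE[OF int nn] by simp
      then have "AE t in lborel. q t = 0"
        by eventually_elim (auto simp: q_def I_def Ioo_e_def real indicator_def split: if_splits)
      then have "integral\<^sup>L lborel q = 0" by (rule integral_eq_zero_AE)
      then show False using q1 by simp
    qed
  qed (use ab in auto)
  show "a < ereal \<mu>"
  proof (cases a)
    case (real \<alpha>)
    show ?thesis
    proof (rule ccontr)
      assume "\<not> a < ereal \<mu>"
      then have le: "\<mu> \<le> \<alpha>" using real by auto
      have eq: "integral\<^sup>L lborel (\<lambda>t. (t - \<alpha>) * q t) = \<mu> - \<alpha>"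
        using qint x1 q1 by (simp add: left_diff_distrib \<mu>_def)
      have int: "integrable lborel (\<lambda>t. (t - \<alpha>) * q t)" using qint x1 by (simp add: left_diff_distrib)
      have nn: "AE t in lborel. 0 \<le> (t - \<alpha>) * q t" using qnn
        by eventually_elim (auto simp: q_def I_def Ioo_e_def real indicator_def)
      have "integral\<^sup>L lborel (\<lambda>t. (t - \<alpha>) * q t) = 0"
        using integral_nonneg_AE[OF nn] eq le by linarith
      then have "AE t in lborel. (t - \<alpha>) * q t = 0" using integral_nonneg_eq_0_iff_AE[OF int nn] by simp
      then have "AE t in lborel. q t = 0"
        by eventually_elim (auto simp: q_def I_def Ioo_e_def real indicator_def split: if_splits)
      then have "integral\<^sup>L lborel q = 0" by (rule integral_eq_zero_AE)
      then show False using q1 by simp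
    qed
  qed (use ab in auto)
qed

lemma inner_int:
  fixes I :: "real set" and \<mu> t :: real
  assumes Imeas: "I \<in> sets lborel" and tI: "t \<in> I"
    and sub1: "t \<le> \<mu> \<Longrightarrow> {t..\<mu>} \<subseteq> I" and sub2: "\<mu> < t \<Longrightarrow> {\<mu><..<t} \<subseteq> I"
  shows "(\<integral>\<^sup>+x. ennreal (indicator I x * (if t \<le> x \<and> x \<le> \<mu> then \<mu> - t else if \<mu> < x \<and> x < t then t - \<mu> else 0)) \<partial>lborel)
     = ennreal ((t - \<mu>)\<^sup>2)"
proof (cases "t \<le> \<mu>")
  case True
  have "(\<integral>\<^sup>+x. ennreal (indicator I x * (if t \<le> x \<and> x \<le> \<mu> then \<mu> - t else if \<mu> < x \<and> x < t then t - \<mu> else 0)) \<partial>lborel)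
    = (\<integral>\<^sup>+x. ennreal (\<mu> - t) * indicator {t..\<mu>} x \<partial>lborel)"
    using True sub1 by (intro nn_integral_cong) (auto simp: indicator_def)
  also have "\<dots> = ennreal (\<mu> - t) * ennreal (\<mu> - t)"
    using True by (simp add: nn_integral_cmult_indicator)
  also have "\<dots> = ennreal ((t - \<mu>)\<^sup>2)"
    using True by (simp add: power2_eq_square ennreal_mult[symmetric] algebra_simps)
  finally show ?thesis .
next
  case False
  have "(\<integral>\<^sup>+x. ennreal (indicator I x * (if t \<le> x \<and> x \<le> \<mu> then \<mu> - t else if \<mu> < x \<and> x < t then t - \<mu> else 0)) \<partial>lborel)
    = (\<integral>\<^sup>+x. ennreal (t - \<mu>) * indicator {\<mu><..<t} x \<partial>lborel)"
    using False sub2 by (intro nn_integral_cong) (auto simp: indicator_def)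
  also have "\<dots> = ennreal (t - \<mu>) * ennreal (t - \<mu>)"
    using False by (simp add: nn_integral_cmult_indicator)
  also have "\<dots> = ennreal ((t - \<mu>)\<^sup>2)"
    using False by (simp add: power2_eq_square ennreal_mult[symmetric] algebra_simps)
  finally show ?thesis .
qed


theorem corollary2p5:
  fixes a b :: ereal and p :: "real \<Rightarrow> real"
  assumes dens: "is_density a b p"
    and finvar: "set_integrable lborel (Ioo_e a b) (\<lambda>x. x\<^sup>2 * p x)"
  defines "\<tau> \<equiv> (\<lambda>x. - Ttilde a b p (\<lambda>t. t) x)"
  shows "ennreal (Varp a b p (\<lambda>t. t)) = (\<integral>\<^sup>+ x \<in> Ioo_e a b. ennreal (\<bar>\<tau> x\<bar> * p x) \<partial>lborel)
    \<and> (\<forall>w. is_weight a b p w \<and> Cpw a b p w = 1 \<longrightarrow>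
         ennreal (Varp a b p (\<lambda>t. t)) \<le> (\<integral>\<^sup>+ x \<in> Ioo_e a b. ennreal (\<bar>w x\<bar> * p x) \<partial>lborel))"
proof -
  define I where "I = Ioo_e a b"
  define q where "q = (\<lambda>t. indicator I t * p t)"
  define \<mu> where "\<mu> = integral\<^sup>L lborel (\<lambda>t. t * q t)"
  note S = setup1[OF dens finvar I_def q_def \<mu>_def]
  have Imeas[measurable]: "I \<in> sets lborel" and qint: "integrable lborel q"
    and qnn: "AE t in lborel. 0 \<le> q t" and q1: "integral\<^sup>L lborel q = 1"
    and x1: "integrable lborel (\<lambda>t. t * q t)" and x2: "integrable lborel (\<lambda>t. t\<^sup>2 * q t)"
    and a\<mu>: "a < ereal \<mu>" and \<mu>b: "ereal \<mu> < b" and ppos: "AE t in lborel. t \<in> I \<longrightarrow> 0 < p t"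
    using S by auto
  have qmeas[measurable]: "q \<in> borel_measurable lborel" using qint by auto
  have Ep_mu: "Ep a b p (\<lambda>t. t) = \<mu>"
    unfolding Ep_def set_lebesgue_integral_def \<mu>_def q_def I_def by (simp add: mult_ac)
  define V where "V = integral\<^sup>L lborel (\<lambda>t. (t - \<mu>)\<^sup>2 * q t)"
  have Veq: "(\<lambda>t. (t - \<mu>)\<^sup>2 * q t) = (\<lambda>t. t\<^sup>2 * q t - 2 * \<mu> * (t * q t) + \<mu>\<^sup>2 * q t)"
    by (auto simp: power2_diff algebra_simps)
  have Vint: "integrable lborel (\<lambda>t. (t - \<mu>)\<^sup>2 * q t)"
    unfolding Veq using qint x1 x2 by auto
  have Var: "Varp a b p (\<lambda>t. t) = V"
    unfolding Varp_def Ep_mu unfolding Ep_def set_lebesgue_integral_def V_def q_def I_def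
    by (simp add: mult_ac)
  have cint: "integrable lborel (\<lambda>t. (t - \<mu>) * q t)" using qint x1 by (simp add: left_diff_distrib)
  have c0: "integral\<^sup>L lborel (\<lambda>t. (t - \<mu>) * q t) = 0"
    using qint x1 q1 by (simp add: left_diff_distrib \<mu>_def)
  define K where "K = (\<lambda>x t::real. if t \<le> x \<and> x \<le> \<mu> then \<mu> - t else if \<mu> < x \<and> x < t then t - \<mu> else (0::real))"
  have Knn: "K x t \<ge> 0" for x t by (auto simp: K_def)
  define F where "F x = (LINT t:{t. a < ereal t \<and> t \<le> x}|lborel. (t - \<mu>) * p t)" for x
  have tau: "\<tau> x = - ((1 / p x) * F x)" for x unfolding \<tau>_def Ttilde_def Ep_mu F_def by simp
  have Fq: "F x = integral\<^sup>L lborel (\<lambda>t. indicator {..x} t * ((t - \<mu>) * q t))" if "x \<in> I" for x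
    unfolding F_def set_lebesgue_integral_def
  proof (intro Bochner_Integration.integral_cong refl)
    fix t
    show "indicator {t. a < ereal t \<and> t \<le> x} t *\<^sub>R ((t - \<mu>) * p t) = indicator {..x} t * ((t - \<mu>) * q t)"
    proof -
      have tb: "t \<le> x \<Longrightarrow> ereal t < b" using that unfolding I_def Ioo_e_def
        by (metis (mono_tags) ereal_less_eq(3) mem_Collect_eq order.strict_trans1)
      then show ?thesis using that by (auto simp: indicator_def q_def I_def Ioo_e_def)
    qed
  qed
  have absF: "ennreal \<bar>F x\<bar> = (\<integral>\<^sup>+t. ennreal (q t * K x t) \<partial>lborel)" if xI: "x \<in> I" for x
  proof -
    have nn: "AE t in lborel. 0 \<le> q t * K x t" using qnn by eventually_elim (simp add: Knn)
    have i1: "integrable lborel (\<lambda>t. indicator {..x} t * ((t - \<mu>) * q t))"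
      using integrable_real_mult_indicator[OF _ cint, of "{..x}"] by (simp add: mult_ac)
    have i2: "integrable lborel (\<lambda>t. indicator {x<..} t * ((t - \<mu>) * q t))"
      using integrable_real_mult_indicator[OF _ cint, of "{x<..}"] by (simp add: mult_ac)
    show ?thesis
    proof (cases "x \<le> \<mu>")
      case True
      have eq: "(\<lambda>t. q t * K x t) = (\<lambda>t. - (indicator {..x} t * ((t - \<mu>) * q t)))"
        using True by (auto simp: K_def indicator_def fun_eq_iff algebra_simps)
      have int: "integrable lborel (\<lambda>t. q t * K x t)" unfolding eq using i1 by simp
      have "(\<integral>\<^sup>+t. ennreal (q t * K x t) \<partial>lborel) = ennreal (integral\<^sup>L lborel (\<lambda>t. q t * K x t))"
        by (rule nn_integral_eq_integral[OF int nn])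
      moreover have "integral\<^sup>L lborel (\<lambda>t. q t * K x t) = - F x"
        unfolding eq Fq[OF xI] by simp
      moreover have "integral\<^sup>L lborel (\<lambda>t. q t * K x t) \<ge> 0" using integral_nonneg_AE[OF nn] .
      ultimately show ?thesis by simp
    next
      case False
      have eq: "(\<lambda>t. q t * K x t) = (\<lambda>t. indicator {x<..} t * ((t - \<mu>) * q t))"
        using False by (auto simp: K_def indicator_def fun_eq_iff algebra_simps)
      have int: "integrable lborel (\<lambda>t. q t * K x t)" unfolding eq using i2 by simp
      have "(\<integral>\<^sup>+t. ennreal (q t * K x t) \<partial>lborel) = ennreal (integral\<^sup>L lborel (\<lambda>t. q t * K x t))"
        by (rule nn_integral_eq_integral[OF int nn])
      moreover have "(\<lambda>t. (t - \<mu>) * q t) = (\<lambda>t. indicator {..x} t * ((t - \<mu>) * q t) + indicator {x<..} t * ((t - \<mu>) * q t))"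
        by (auto simp: indicator_def fun_eq_iff)
      then have "integral\<^sup>L lborel (\<lambda>t. (t - \<mu>) * q t) = integral\<^sup>L lborel (\<lambda>t. indicator {..x} t * ((t - \<mu>) * q t)) + integral\<^sup>L lborel (\<lambda>t. indicator {x<..} t * ((t - \<mu>) * q t))"
        by (metis (no_types, lifting) Bochner_Integration.integral_add[OF i1 i2])
      then have "0 = F x + integral\<^sup>L lborel (\<lambda>t. q t * K x t)"
        using c0 unfolding eq Fq[OF xI] by simp
      moreover have "integral\<^sup>L lborel (\<lambda>t. q t * K x t) \<ge> 0" using integral_nonneg_AE[OF nn] .
      ultimately show ?thesis by simp
    qed
  qed
  have meas: "(\<lambda>(x, t). ennreal (indicator I x * q t * K x t)) \<in> borel_measurable (lborel \<Otimes>\<^sub>M lborel)"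
    unfolding K_def by measurable
  have part1: "ennreal (Varp a b p (\<lambda>t. t)) = (\<integral>\<^sup>+ x \<in> Ioo_e a b. ennreal (\<bar>\<tau> x\<bar> * p x) \<partial>lborel)"
  proof -
    have "(\<integral>\<^sup>+ x \<in> Ioo_e a b. ennreal (\<bar>\<tau> x\<bar> * p x) \<partial>lborel)
        = (\<integral>\<^sup>+x. \<integral>\<^sup>+t. ennreal (indicator I x * q t * K x t) \<partial>lborel \<partial>lborel)"
      unfolding I_def[symmetric]
    proof (rule nn_integral_cong_AE)
      show "AE x in lborel. ennreal (\<bar>\<tau> x\<bar> * p x) * indicator I x = (\<integral>\<^sup>+t. ennreal (indicator I x * q t * K x t) \<partial>lborel)"
        using ppos
      proof eventually_elim
        case (elim x)
        show ?case
        proof (cases "x \<in> I")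
          case True
          then have px: "p x > 0" using elim by auto
          have "\<bar>\<tau> x\<bar> * p x = \<bar>F x\<bar>" using px by (simp add: tau abs_mult)
          then show ?thesis using True absF[OF True] by simp
        qed simp
      qed
    qed
    also have "\<dots> = (\<integral>\<^sup>+t. \<integral>\<^sup>+x. ennreal (indicator I x * q t * K x t) \<partial>lborel \<partial>lborel)"
      using lborel_pair.Fubini'[of "\<lambda>x t. ennreal (indicator I x * q t * K x t)", OF meas] by simp
    also have "\<dots> = (\<integral>\<^sup>+t. ennreal ((t - \<mu>)\<^sup>2 * q t) \<partial>lborel)"
    proof (rule nn_integral_cong_AE)
      show "AE t in lborel. (\<integral>\<^sup>+x. ennreal (indicator I x * q t * K x t) \<partial>lborel) = ennreal ((t - \<mu>)\<^sup>2 * q t)"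
        using qnn
      proof eventually_elim
        case (elim t)
        show ?case
        proof (cases "t \<in> I")
          case True
          have "(\<integral>\<^sup>+x. ennreal (indicator I x * q t * K x t) \<partial>lborel)
              = (\<integral>\<^sup>+x. ennreal (q t) * ennreal (indicator I x * K x t) \<partial>lborel)"
            using elim Knn by (intro nn_integral_cong) (simp add: ennreal_mult[symmetric] mult_ac)
          also have "\<dots> = ennreal (q t) * (\<integral>\<^sup>+x. ennreal (indicator I x * K x t) \<partial>lborel)"
            by (rule nn_integral_cmult) (unfold K_def, measurable)
          also have "(\<integral>\<^sup>+x. ennreal (indicator I x * K x t) \<partial>lborel) = ennreal ((t - \<mu>)\<^sup>2)"
            unfolding K_def
          proof (rule inner_int[OF Imeas True])
            show "{t..\<mu>} \<subseteq> I" if "t \<le> \<mu>"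
            proof
              fix x assume "x \<in> {t..\<mu>}"
              then have "ereal x \<le> ereal \<mu>" "ereal t \<le> ereal x" by auto
              then have "ereal x < b" "a < ereal x"
                using True \<mu>b order.strict_trans1 order.strict_trans2 unfolding I_def Ioo_e_def by blast+
              then show "x \<in> I" unfolding I_def Ioo_e_def by simp
            qed
            show "{\<mu><..<t} \<subseteq> I" if "\<mu> < t"
            proof
              fix x assume "x \<in> {\<mu><..<t}"
              then have "ereal x \<le> ereal t" "ereal \<mu> \<le> ereal x" by auto
              then have "ereal x < b" "a < ereal x"
                using True a\<mu> order.strict_trans1 order.strict_trans2 unfolding I_def Ioo_e_def by blast+
              then show "x \<in> I" unfolding I_def Ioo_e_def by simp
            qed
          qed
          finally show ?thesis using elim by (simp add: ennreal_mult[symmetric] mult_ac)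
        next
          case False
          then show ?thesis by (simp add: q_def)
        qed
      qed
    qed
    also have "\<dots> = ennreal V"
      unfolding V_def using qnn by (intro nn_integral_eq_integral[OF Vint]) (auto elim: eventually_mono)
    finally show ?thesis using Var by simp
  qed
  have part2: "ennreal (Varp a b p (\<lambda>t. t)) \<le> (\<integral>\<^sup>+ x \<in> Ioo_e a b. ennreal (\<bar>w x\<bar> * p x) \<partial>lborel)"
    if w: "is_weight a b p w" and C1: "Cpw a b p w = 1" for w
  proof -
    have wpos: "AE x in lborel. x \<in> I \<longrightarrow> w x > 0"
      and pwmeas[measurable]: "(\<lambda>x. p x * w x) \<in> borel_measurable lborel"
      using w by (auto simp: is_weight_def loc_integrable_def I_def)
    define J where "J = (\<integral>\<^sup>+ x \<in> I. ennreal (\<bar>w x\<bar> * p x) \<partial>lborel)"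
    define L where "L = (\<integral>\<^sup>+ x \<in> I. ennreal (((\<lambda>t. 1::real) x)\<^sup>2 * w x * p x) \<partial>lborel)"
    have LJ: "L \<le> J" unfolding L_def J_def
      using ppos by (intro nn_integral_mono_AE) (auto elim!: eventually_mono simp: indicator_def intro!: ennreal_leI)
    show ?thesis
    proof (cases "J = \<infinity>")
      case True then show ?thesis by (simp add: J_def I_def)
    next
      case False
      have Jeq: "J = (\<integral>\<^sup>+x. ennreal (norm (indicator I x *\<^sub>R (((\<lambda>t. 1::real) x)\<^sup>2 * p x * w x))) \<partial>lborel)"
        unfolding J_def using ppos
        by (intro nn_integral_cong_AE) (auto elim!: eventually_mono simp: indicator_def abs_mult)
      have int: "set_integrable lborel I (\<lambda>x. ((\<lambda>t. 1::real) x)\<^sup>2 * p x * w x)"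
        unfolding set_integrable_def
        by (rule integrableI_bounded) (use False Jeq in \<open>auto simp: top.not_eq_extremum\<close>)
      have H1: "in_H1 a b p w (\<lambda>t. t) (\<lambda>t. 1)"
        unfolding in_H1_def
      proof (intro conjI ballI impI allI)
        show "(\<lambda>t. t) \<in> borel_measurable lborel" by simp
        show "set_integrable lborel (Ioo_e a b) (\<lambda>x. x\<^sup>2 * p x)" by (rule finvar)
        show "loc_integrable a b (\<lambda>t. 1)" unfolding loc_integrable_def
          by (auto simp: set_integrable_def emeasure_lborel_Icc_eq intro!: integrable_real_indicator)
        show "set_integrable lborel (Ioo_e a b) (\<lambda>x. ((\<lambda>t. 1::real) x)\<^sup>2 * p x * w x)"
          using int by (simp add: I_def)
        fix x y :: real assume "x \<le> y"
        then show "y - x = (LINT t:{x..y}|lborel. 1)"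
          by (simp add: set_lebesgue_integral_def measure_lborel_Icc)
      qed
      define S where "S = {C. \<forall>h g. in_H1 a b p w h g \<longrightarrow>
         ennreal (Varp a b p h) \<le> C * (\<integral>\<^sup>+ x \<in> Ioo_e a b. ennreal ((g x)\<^sup>2 * w x * p x) \<partial>lborel)}"
      have InfS: "Inf S = 1" using C1 unfolding Cpw_def S_def by simp
      have key: "ennreal V \<le> C * L" if "C \<in> S" for C
        using that H1 Var unfolding S_def L_def I_def by force
      have Sne: "S \<noteq> {}" using InfS by auto
      then obtain C0 where C0: "C0 \<in> S" by auto
      have "L \<noteq> \<infinity>" using LJ False by (auto simp: top_unique)
      then obtain l where l: "L = ennreal l" "0 \<le> l" by (cases L) auto
      have "ennreal V \<le> L"
      proof (cases "l = 0")
        case True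
        then show ?thesis using key[OF C0] l by simp
      next
        case False
        then have lpos: "l > 0" using l by simp
        have "ennreal (V / l) \<le> C" if "C \<in> S" for C
        proof (cases C)
          case (real c)
          have "ennreal V \<le> ennreal (c * l)" using key[OF that] real l by (simp add: ennreal_mult)
          then have "V \<le> c * l" using real l by (simp add: ennreal_le_iff)
          then have "V / l \<le> c" using lpos by (simp add: divide_le_eq)
          then show ?thesis using real by (simp add: ennreal_leI)
        qed simp
        then have "ennreal (V / l) \<le> Inf S" by (rule Inf_greatest)
        then have "V / l \<le> 1" using InfS by (simp add: ennreal_le_1)
        then have "V \<le> l" using lpos by (simp add: divide_le_eq)
        then show ?thesis using l by (simp add: ennreal_leI)
      qed
      then show ?thesis using LJ Var unfolding J_def I_def by simp
    qed
  qed
  show ?thesis using part1 part2 by blast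
qed

end
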